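(* Let $m\ge0$, $n\ge1$, $r\ge n$, and let $f\in\mathbb{F}_q[x_1,\dots,x_r]$ satisfy $\delta_{n+1;m}(f)=0$. Then there exists $g\in\mathbb{F}_q[x_1,\dots,x_{r-1}]$ with $f=\delta_{n;m}(g)$.
   Context: $q$ is a power of a prime. Delta operators: for integers $b\ge0$, $c\ge0$, $1\le a\le c+1$, $\delta_{a;b}:\mathbb{F}_q(x_1,\dots,x_c)\to\mathbb{F}_q(x_1,\dots,x_{c+1})$ sends $f$ to $N/L(x_1,\dots,x_a)$, where $N$ is the $a\times a$ determinant whose $t$-th row is $(x_1^{q^{t-1}},\dots,x_a^{q^{t-1}})$ for $t=1,\dots,a-1$ and whose last row is $(x_1^{q^b}f(\hat x_1),\dots,x_a^{q^b}f(\hat x_a))$, with $f(\hat x_i)=f(x_1,\dots,x_{i-1},x_{i+1},\dots,x_{c+1})$, and $L(x_1,\dots,x_a)=\det(x_j^{q^{t-1}})_{1\le t,j\le a}$. Here $\delta_{n+1;m}$ is applied with $c=r$ and $\delta_{n;m}$ with $c=r-1$. *)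

theory Defs
  imports "HOL-Library.Poly_Mapping" "Jordan_Normal_Form.Determinant"
begin

text \<open>Variable x_(j+1) of the paper is the variable with index j here (0-based).\<close>

type_synonym 'a mpol = "(nat \<Rightarrow>\<^sub>0 nat) \<Rightarrow>\<^sub>0 'a"

definition const_mp :: "'a::zero \<Rightarrow> 'a mpol" where
  "const_mp c = Poly_Mapping.single 0 c"

definition Var :: "nat \<Rightarrow> 'a::{zero,one} mpol" where
  "Var j = Poly_Mapping.single (Poly_Mapping.single j 1) 1"

definition vars_mp :: "'a::zero mpol \<Rightarrow> nat set" where
  "vars_mp p = (\<Union>m \<in> Poly_Mapping.keys p. Poly_Mapping.keys m)"

definition subst_mp :: "(nat \<Rightarrow> 'a::comm_semiring_1 mpol) \<Rightarrow> 'a mpol \<Rightarrow> 'a mpol" where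
  "subst_mp s p = (\<Sum>m \<in> Poly_Mapping.keys p. const_mp (Poly_Mapping.lookup p m) * (\<Prod>v \<in> Poly_Mapping.keys m. s v ^ Poly_Mapping.lookup m v))"

text \<open>f(hat x_i): the variables of f are sent to x_1,...,x_(i-1),x_(i+1),...
  In 0-based indexing, omitting variable i: variable v goes to v if v < i, else v+1.\<close>
definition hat_mp :: "nat \<Rightarrow> 'a::comm_semiring_1 mpol \<Rightarrow> 'a mpol" where
  "hat_mp i f = subst_mp (\<lambda>v. Var (if v < i then v else Suc v)) f"

definition L_mat :: "nat \<Rightarrow> nat \<Rightarrow> 'a::comm_ring_1 mpol mat" where
  "L_mat q a = mat a a (\<lambda>(t, j). Var j ^ (q ^ t))"

definition N_mat :: "nat \<Rightarrow> nat \<Rightarrow> nat \<Rightarrow> 'a::comm_ring_1 mpol \<Rightarrow> 'a mpol mat" where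
  "N_mat q a b f = mat a a (\<lambda>(t, j).
      if t < a - 1 then Var j ^ (q ^ t) else Var j ^ (q ^ b) * hat_mp j f)"

text \<open>Over F_q with q = CARD('a), delta_(a;b)(f) = det (N_mat q a b f) / det (L_mat q a).\<close>

end

theory Submission
  imports Defs "HOL-Computational_Algebra.Polynomial"
begin

definition mono_mp :: "(nat \<Rightarrow> 'a::comm_semiring_1 mpol) \<Rightarrow> (nat \<Rightarrow>\<^sub>0 nat) \<Rightarrow> 'a mpol" where
  "mono_mp s m = (\<Prod>v \<in> Poly_Mapping.keys m. s v ^ Poly_Mapping.lookup m v)"

lemma subst_mp_mono: "subst_mp s p = (\<Sum>m \<in> Poly_Mapping.keys p. const_mp (Poly_Mapping.lookup p m) * mono_mp s m)"
  unfolding subst_mp_def mono_mp_def ..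

lemma const_mp_0[simp]: "const_mp 0 = 0" by (simp add: const_mp_def)
lemma const_mp_1[simp]: "const_mp 1 = 1" by (simp add: const_mp_def)
lemma const_mp_add: "const_mp (a + b) = const_mp a + const_mp b" by (simp add: const_mp_def single_add)
lemma const_mp_mult: "const_mp (a * b) = const_mp a * const_mp b" by (simp add: const_mp_def mult_single)

lemma mono_superset:
  assumes "finite K" "Poly_Mapping.keys m \<subseteq> K"
  shows "mono_mp s m = (\<Prod>v \<in> K. s v ^ Poly_Mapping.lookup m v)"
  unfolding mono_mp_def
  by (rule prod.mono_neutral_left) (use assms in \<open>auto simp: in_keys_iff\<close>)

lemma mono_add: "mono_mp s (a + b) = mono_mp s a * mono_mp s b"
proof -
  let ?K = "Poly_Mapping.keys a \<union> Poly_Mapping.keys b"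
  have "mono_mp s (a + b) = (\<Prod>v \<in> ?K. s v ^ Poly_Mapping.lookup (a+b) v)"
    by (rule mono_superset) (auto simp: keys_add)
  also have "\<dots> = (\<Prod>v \<in> ?K. s v ^ Poly_Mapping.lookup a v) * (\<Prod>v \<in> ?K. s v ^ Poly_Mapping.lookup b v)"
    by (simp add: lookup_add power_add prod.distrib)
  also have "\<dots> = mono_mp s a * mono_mp s b"
    by (subst (1 2) mono_superset[of ?K]) auto
  finally show ?thesis .
qed

lemma mono_zero[simp]: "mono_mp s 0 = 1" by (simp add: mono_mp_def)

lemma subst_superset:
  assumes "finite K" "Poly_Mapping.keys p \<subseteq> K"
  shows "subst_mp s p = (\<Sum>m \<in> K. const_mp (Poly_Mapping.lookup p m) * mono_mp s m)"
  unfolding subst_mp_mono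
  by (rule sum.mono_neutral_left) (use assms in \<open>auto simp: in_keys_iff\<close>)

lemma subst_add: "subst_mp s (p + q) = subst_mp s p + subst_mp s q"
proof -
  let ?K = "Poly_Mapping.keys p \<union> Poly_Mapping.keys q"
  have "subst_mp s (p + q) = (\<Sum>m \<in> ?K. const_mp (Poly_Mapping.lookup (p+q) m) * mono_mp s m)"
    by (rule subst_superset) (auto simp: keys_add)
  also have "\<dots> = (\<Sum>m \<in> ?K. const_mp (Poly_Mapping.lookup p m) * mono_mp s m) + (\<Sum>m \<in> ?K. const_mp (Poly_Mapping.lookup q m) * mono_mp s m)"
    by (simp add: lookup_add const_mp_add distrib_right sum.distrib)
  also have "\<dots> = subst_mp s p + subst_mp s q"
    by (subst (1 2) subst_superset[of ?K]) auto
  finally show ?thesis .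
qed

lemma subst_zero[simp]: "subst_mp s 0 = 0" by (simp add: subst_mp_def)

lemma subst_sum: "subst_mp s (sum f A) = (\<Sum>a\<in>A. subst_mp s (f a))"
  by (induction A rule: infinite_finite_induct) (auto simp: subst_add)

lemma subst_single: "subst_mp s (Poly_Mapping.single m c) = const_mp c * mono_mp s m"
  by (cases "c = 0") (auto simp: subst_mp_mono)

lemma poly_rep: "p = (\<Sum>m \<in> Poly_Mapping.keys p. Poly_Mapping.single m (Poly_Mapping.lookup p m))"
  by (rule poly_mapping_eqI) (auto simp: lookup_sum lookup_single when_def in_keys_iff)

lemma subst_mult: "subst_mp s (p * q) = subst_mp s p * subst_mp s (q :: 'a::comm_semiring_1 mpol)"
proof -
  have "p * q = (\<Sum>a \<in> Poly_Mapping.keys p. \<Sum>b \<in> Poly_Mapping.keys q.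
     Poly_Mapping.single (a + b) (Poly_Mapping.lookup p a * Poly_Mapping.lookup q b))"
  proof -
    have "p * q = (\<Sum>a \<in> Poly_Mapping.keys p. Poly_Mapping.single a (Poly_Mapping.lookup p a)) *
        (\<Sum>b \<in> Poly_Mapping.keys q. Poly_Mapping.single b (Poly_Mapping.lookup q b))"
      by (rule arg_cong2[where f="(*)"]; rule poly_rep)
    thus ?thesis by (simp add: sum_distrib_left sum_distrib_right mult_single sum.swap[of _ "Poly_Mapping.keys q"])
  qed
  hence "subst_mp s (p * q) = (\<Sum>a \<in> Poly_Mapping.keys p. \<Sum>b \<in> Poly_Mapping.keys q.
     const_mp (Poly_Mapping.lookup p a) * mono_mp s a * (const_mp (Poly_Mapping.lookup q b) * mono_mp s b))"
    by (simp add: subst_sum subst_single const_mp_mult mono_add mult_ac)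
  also have "\<dots> = subst_mp s p * subst_mp s q"
    by (simp add: subst_mp_mono sum_distrib_left sum_distrib_right sum.swap[of _ "Poly_Mapping.keys q"])
  finally show ?thesis .
qed

lemma subst_one[simp]: "subst_mp s 1 = 1"
  by (simp add: subst_mp_mono)

lemma subst_hom: "comm_semiring_hom (subst_mp s)"
  by unfold_locales (auto simp: subst_add subst_mult)

lemma subst_ring_hom: "comm_ring_hom (subst_mp (s :: nat \<Rightarrow> 'a::comm_ring_1 mpol))"
  by unfold_locales (auto simp: subst_add subst_mult)

lemma subst_Var[simp]: "subst_mp s (Var v) = s v"
  by (simp add: Var_def subst_single mono_mp_def)

lemma subst_const[simp]: "subst_mp s (const_mp c) = const_mp c"
  by (simp add: const_mp_def subst_single)

lemma single_Var_pow: "Poly_Mapping.single (Poly_Mapping.single v (1::nat)) (1::'a::comm_semiring_1) ^ k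
   = Poly_Mapping.single (Poly_Mapping.single v k) 1"
proof (induction k)
  case (Suc k)
  have "Poly_Mapping.single v (Suc k) = Poly_Mapping.single v 1 + Poly_Mapping.single v k"
    using single_add[of v 1 k] by simp
  thus ?case using Suc by (simp add: mult_single)
qed simp

lemma prod_single_Var: "finite K \<Longrightarrow> (\<Prod>v\<in>K. Poly_Mapping.single (Poly_Mapping.single v (1::nat)) (1::'a::comm_semiring_1) ^ e v)
   = Poly_Mapping.single (\<Sum>v\<in>K. Poly_Mapping.single v (e v)) 1"
proof (induction K rule: finite_induct)
  case (insert x F)
  thus ?case using single_Var_pow[of x "e x", where 'a='a] by (simp add: mult_single)
qed simp

lemma mono_Var: "mono_mp (Var :: nat \<Rightarrow> 'a::comm_semiring_1 mpol) m = Poly_Mapping.single m 1"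
proof -
  have "mono_mp (Var :: nat \<Rightarrow> 'a mpol) m = Poly_Mapping.single (\<Sum>v\<in>Poly_Mapping.keys m. Poly_Mapping.single v (Poly_Mapping.lookup m v)) 1"
    unfolding mono_mp_def Var_def by (rule prod_single_Var) simp
  also have "(\<Sum>v\<in>Poly_Mapping.keys m. Poly_Mapping.single v (Poly_Mapping.lookup m v)) = m"
    by (rule poly_rep[symmetric])
  finally show ?thesis .
qed

lemma subst_id: "subst_mp Var p = (p :: 'a::comm_semiring_1 mpol)"
proof -
  have "subst_mp Var p = (\<Sum>m \<in> Poly_Mapping.keys p. Poly_Mapping.single m (Poly_Mapping.lookup p m))"
    unfolding subst_mp_mono mono_Var by (simp add: const_mp_def mult_single)
  also have "\<dots> = p" by (rule poly_rep[symmetric])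
  finally show ?thesis .
qed

lemma subst_subst: "subst_mp s (subst_mp t p) = subst_mp (\<lambda>v. subst_mp s (t v)) (p :: 'a::comm_semiring_1 mpol)"
proof -
  interpret comm_semiring_hom "subst_mp s" by (rule subst_hom)
  show ?thesis
    unfolding subst_mp_mono[of _ p] mono_mp_def
    by (simp add: hom_sum hom_mult hom_prod hom_power)
qed

lemma subst_cong: "(\<And>v. s v = t v) \<Longrightarrow> subst_mp s p = subst_mp t p"
proof -
  assume "\<And>v. s v = t v"
  hence "s = t" by auto
  thus ?thesis by simp
qed

subsection \<open>Variables\<close>

lemma vars_add: "vars_mp (p + q) \<subseteq> vars_mp p \<union> vars_mp q"
proof
  fix v assume "v \<in> vars_mp (p+q)"
  then obtain m where m: "m \<in> Poly_Mapping.keys (p+q)" "v \<in> Poly_Mapping.keys m" unfolding vars_mp_def by blast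
  have "Poly_Mapping.keys (p+q) \<subseteq> Poly_Mapping.keys p \<union> Poly_Mapping.keys q" by (rule keys_add)
  with m have "m \<in> Poly_Mapping.keys p \<or> m \<in> Poly_Mapping.keys q" by blast
  with m(2) show "v \<in> vars_mp p \<union> vars_mp q" unfolding vars_mp_def by blast
qed

lemma keys_add_nat: "Poly_Mapping.keys (a + b :: nat \<Rightarrow>\<^sub>0 nat) \<subseteq> Poly_Mapping.keys a \<union> Poly_Mapping.keys b"
  by (rule keys_add)

lemma vars_mult: "vars_mp (p * q :: 'a::comm_semiring_1 mpol) \<subseteq> vars_mp p \<union> vars_mp q"
proof
  fix v assume "v \<in> vars_mp (p * q)"
  then obtain m where m: "m \<in> Poly_Mapping.keys (p * q)" "v \<in> Poly_Mapping.keys m" unfolding vars_mp_def by auto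
  have "m \<in> {a + b | a b. a \<in> Poly_Mapping.keys p \<and> b \<in> Poly_Mapping.keys q}"
    using keys_mult[of p q] m(1) by (rule subsetD)
  then obtain a b where ab: "m = a + b" "a \<in> Poly_Mapping.keys p" "b \<in> Poly_Mapping.keys q" by blast
  have "v \<in> Poly_Mapping.keys a \<or> v \<in> Poly_Mapping.keys b" using keys_add_nat[of a b] m(2) ab(1) by blast
  thus "v \<in> vars_mp p \<union> vars_mp q" using ab unfolding vars_mp_def by blast
qed

lemma keys_uminus_pm: "Poly_Mapping.keys (- p) = Poly_Mapping.keys (p :: 'b \<Rightarrow>\<^sub>0 'c::ab_group_add)"
  by (auto simp: in_keys_iff)

lemma vars_uminus[simp]: "vars_mp (- p) = vars_mp (p :: 'a::ab_group_add mpol)"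
  unfolding vars_mp_def keys_uminus_pm ..

lemma vars_minus: "vars_mp (p - q :: 'a::ab_group_add mpol) \<subseteq> vars_mp p \<union> vars_mp q"
  using vars_add[of p "-q"] by simp

lemma vars_const: "vars_mp (const_mp c) = {}"
  unfolding vars_mp_def const_mp_def by (cases "c = 0") auto

lemma vars_zero[simp]: "vars_mp 0 = {}"
  unfolding vars_mp_def by simp

lemma vars_one[simp]: "vars_mp (1 :: 'a::{zero_neq_one} mpol) = {}"
  unfolding vars_mp_def by simp

lemma vars_of_int[simp]: "vars_mp (of_int k :: 'a::ring_1 mpol) = {}"
  using vars_const[of "of_int k :: 'a"] unfolding const_mp_def by simp

lemma vars_Var: "vars_mp (Var v :: 'a::{zero_neq_one} mpol) = {v}"
  unfolding vars_mp_def Var_def by simp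

lemma vars_sum: "(\<And>a. a \<in> A \<Longrightarrow> vars_mp (f a) \<subseteq> V) \<Longrightarrow> vars_mp (sum f A) \<subseteq> V"
proof (induction A rule: infinite_finite_induct)
  case (insert x F) then show ?case using vars_add[of "f x" "sum f F"] by auto
qed auto

lemma vars_prod: "(\<And>a. a \<in> A \<Longrightarrow> vars_mp (f a) \<subseteq> V) \<Longrightarrow> vars_mp (prod f A :: 'a::{comm_semiring_1} mpol) \<subseteq> V"
proof (induction A rule: infinite_finite_induct)
  case (infinite A) then show ?case by (simp add: vars_mp_def keys_one)
next
  case empty then show ?case by (simp add: vars_mp_def keys_one)
next
  case (insert x F) then show ?case using vars_mult[of "f x" "prod f F"] by auto
qed

lemma vars_power: "vars_mp p \<subseteq> V \<Longrightarrow> vars_mp (p ^ k :: 'a::{comm_semiring_1} mpol) \<subseteq> V"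
  using vars_prod[of "{..<k}" "\<lambda>_. p" V] by simp

lemma vars_subst: "vars_mp (subst_mp s p :: 'a::comm_semiring_1 mpol) \<subseteq> (\<Union>v \<in> vars_mp p. vars_mp (s v))"
  unfolding subst_mp_mono mono_mp_def
proof (rule vars_sum)
  fix m assume m: "m \<in> Poly_Mapping.keys p"
  show "vars_mp (const_mp (Poly_Mapping.lookup p m) * (\<Prod>v\<in>Poly_Mapping.keys m. s v ^ Poly_Mapping.lookup m v))
         \<subseteq> (\<Union>v \<in> vars_mp p. vars_mp (s v))"
    apply (rule order.trans[OF vars_mult])
    apply (simp add: vars_const)
    apply (rule vars_prod)
    apply (rule vars_power)
    using m unfolding vars_mp_def by blast
qed

lemma vars_det:
  assumes "\<And>i j. i < dim_row A \<Longrightarrow> j < dim_col A \<Longrightarrow> vars_mp (A $$ (i,j)) \<subseteq> V"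
  shows "vars_mp (det (A :: 'a::comm_ring_1 mpol mat)) \<subseteq> V"
  unfolding det_def
  apply (cases "dim_row A = dim_col A"; simp)
  apply (rule vars_sum)
  apply (rule order.trans[OF vars_mult])
  apply simp
  apply (rule vars_prod)
  apply (rule assms)
   apply (auto simp: permutes_def)
  done

subsection \<open>Frobenius\<close>

lemma card_pos_fin: "card (UNIV :: 'a::finite set) > 0"
  by (simp add: finite_UNIV_card_ge_0)

lemma fin_field_pow_card:
  fixes x :: "'a :: {field,finite}"
  shows   "x ^ card (UNIV :: 'a set) = x"
proof (cases "x = 0")
  case False
  have "x * (\<Prod>y\<in>UNIV-{0}. x * y) = x * x ^ (card (UNIV :: 'a set) - 1) * \<Prod>(UNIV-{0})"
    by (simp add: prod.distrib mult_ac)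
  also have "x * x ^ (card (UNIV :: 'a set) - 1) = x ^ Suc (card (UNIV :: 'a set) - 1)"
    by (subst power_Suc) auto
  also have "Suc (card (UNIV :: 'a set) - 1) = card (UNIV :: 'a set)"
    using card_pos_fin[where ?'a = 'a] by simp
  also have "(\<Prod>y\<in>UNIV-{0}. x * y) = (\<Prod>y\<in>UNIV-{0}. y)"
    by (rule prod.reindex_bij_witness[of _ "\<lambda>y. y / x" "\<lambda>y. x * y"]) (use False in auto)
  finally show ?thesis
    by simp
qed (use card_pos_fin[where ?'a = 'a] in auto)

lemma binom_card_zero:
  fixes dummy :: "'a :: {field,finite}"
  assumes "0 < k" "k < card (UNIV :: 'a set)"
  shows "(of_nat (card (UNIV :: 'a set) choose k) :: 'a) = 0"
proof -
  let ?q = "card (UNIV :: 'a set)"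
  define D :: "'a poly" where "D = [:1,1:] ^ ?q - monom 1 ?q - 1"
  have ev: "poly D x = 0" for x
    unfolding D_def by (simp add: poly_monom fin_field_pow_card)
  have c1: "coeff ([:1,1:] ^ ?q) i = (if i \<le> ?q then of_nat (?q choose i) else (0::'a))" for i
  proof (cases "i \<le> ?q")
    case True thus ?thesis using coeff_linear_poly_power[of i ?q "1::'a" 1] by simp
  next
    case False
    have "degree ([:1::'a,1:] ^ ?q) = ?q" by (rule degree_linear_power)
    thus ?thesis using False by (simp add: coeff_eq_0)
  qed
  have cD: "coeff D i = (if i \<le> ?q then of_nat (?q choose i) else 0) - (if ?q = i then 1 else 0) - (if i = 0 then 1 else 0)" for i
    unfolding D_def by (simp add: c1 coeff_monom coeff_1)
  have "D = 0"
  proof (rule ccontr)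
    assume "D \<noteq> 0"
    hence "card {x. poly D x = 0} \<le> degree D" by (rule card_poly_roots_bound)
    moreover have "degree D \<le> ?q - 1"
      by (rule degree_le) (use card_pos_fin[where ?'a = 'a] in \<open>auto simp: cD\<close>)
    moreover have "{x. poly D x = 0} = UNIV" using ev by auto
    ultimately show False using card_pos_fin[where ?'a = 'a] by simp
  qed
  hence "coeff D k = 0" by simp
  thus ?thesis using assms by (simp add: cD)
qed

lemma frob_mpol:
  fixes a b :: "'a :: {field,finite} mpol"
  shows "(a + b) ^ card (UNIV :: 'a set) = a ^ card (UNIV :: 'a set) + b ^ card (UNIV :: 'a set)"
proof -
  let ?q = "card (UNIV :: 'a set)"
  have "(a + b) ^ ?q = (\<Sum>k\<le>?q. of_nat (?q choose k) * a ^ k * b ^ (?q - k))"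
    by (rule binomial_ring)
  also have "\<dots> = (\<Sum>k\<in>{0,?q}. of_nat (?q choose k) * a ^ k * b ^ (?q - k))"
  proof (intro sum.mono_neutral_right ballI)
    fix k assume "k \<in> {..?q} - {0, ?q}"
    hence k: "k > 0" "k < ?q" by auto
    have "(of_nat (?q choose k) :: 'a mpol) = Poly_Mapping.single 0 (of_nat (?q choose k) :: 'a)"
      by simp
    also have "\<dots> = 0" using binom_card_zero[OF k] by simp
    finally show "of_nat (?q choose k) * a ^ k * b ^ (?q - k) = 0" by simp
  qed auto
  finally show ?thesis
    using card_pos_fin[where ?'a = 'a] by (simp add: add_ac)
qed

lemma frob_sum:
  fixes f :: "'b \<Rightarrow> 'a :: {field,finite} mpol"
  shows "(sum f A) ^ card (UNIV :: 'a set) = (\<Sum>i\<in>A. f i ^ card (UNIV :: 'a set))"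
  by (induction A rule: infinite_finite_induct)
     (auto simp: frob_mpol power_0_left card_pos_fin[where ?'a = 'a])

subsection \<open>Subspace polynomial coefficients\<close>

primrec dc :: "nat \<Rightarrow> nat \<Rightarrow> (nat \<Rightarrow> 'a::comm_ring_1 mpol)" where
  "dc q 0 = (\<lambda>k. if k = 0 then 1 else 0)"
| "dc q (Suc i) = (let c = dc q i; w = (\<Sum>l\<le>i. c l * Var i ^ (q ^ l)) ^ (q - 1) in
      (\<lambda>k. (if k = 0 then 0 else c (k - 1) ^ q) - w * c k))"

definition dev :: "nat \<Rightarrow> nat \<Rightarrow> 'a::comm_ring_1 mpol \<Rightarrow> 'a mpol" where
  "dev q i T = (\<Sum>l\<le>i. dc q i l * T ^ (q ^ l))"

lemma dc_Suc: "dc q (Suc i) k = (if k = 0 then 0 else dc q i (k - 1) ^ q) - (dev q i (Var i)) ^ (q - 1) * dc q i k"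
  by (simp add: dev_def Let_def)

declare dc.simps(2)[simp del]

lemma dc_above: "q > 0 \<Longrightarrow> k > i \<Longrightarrow> dc q i k = 0"
proof (induction i arbitrary: k)
  case 0 thus ?case by simp
next
  case (Suc i)
  thus ?case by (simp add: dc_Suc power_0_left)
qed

lemma dc_top: "q > 0 \<Longrightarrow> dc q i i = 1"
proof (induction i)
  case 0 thus ?case by simp
next
  case (Suc i)
  thus ?case by (simp add: dc_Suc dc_above)
qed

lemma dev_Suc:
  fixes T :: "'a::{field,finite} mpol"
  defines "q \<equiv> card (UNIV :: 'a set)"
  shows "dev q (Suc i) T = dev q i T ^ q - (dev q i (Var i)) ^ (q - 1) * dev q i T"
proof -
  have q0: "q > 0" unfolding q_def by (rule card_pos_fin)
  let ?w = "(dev q i (Var i)) ^ (q - 1) :: 'a mpol"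
  have "dev q (Suc i) T = (\<Sum>l\<le>Suc i. (if l = 0 then 0 else dc q i (l - 1) ^ q) * T ^ (q ^ l))
        - ?w * (\<Sum>l\<le>Suc i. dc q i l * T ^ (q ^ l))"
  proof -
    have "dev q (Suc i) T = (\<Sum>l\<le>Suc i. ((if l = 0 then 0 else dc q i (l - 1) ^ q) - ?w * dc q i l) * T ^ (q ^ l))"
      unfolding dev_def[of q "Suc i"] dc_Suc ..
    also have "\<dots> = (\<Sum>l\<le>Suc i. (if l = 0 then 0 else dc q i (l - 1) ^ q) * T ^ (q ^ l) - ?w * (dc q i l * T ^ (q ^ l)))"
      by (rule sum.cong) (simp_all add: algebra_simps)
    also have "\<dots> = (\<Sum>l\<le>Suc i. (if l = 0 then 0 else dc q i (l - 1) ^ q) * T ^ (q ^ l))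
        - ?w * (\<Sum>l\<le>Suc i. dc q i l * T ^ (q ^ l))"
      by (simp only: sum_subtractf sum_distrib_left)
    finally show ?thesis .
  qed
  also have "(\<Sum>l\<le>Suc i. (if l = 0 then 0 else dc q i (l - 1) ^ q) * T ^ (q ^ l))
      = (\<Sum>l\<le>i. (dc q i l * T ^ (q ^ l)) ^ q)"
  proof -
    have "(\<Sum>l\<le>Suc i. (if l = 0 then 0 else dc q i (l - 1) ^ q) * T ^ (q ^ l))
        = (\<Sum>l\<le>i. dc q i l ^ q * T ^ (q ^ Suc l))"
      by (subst sum.atMost_Suc_shift) simp
    also have "\<dots> = (\<Sum>l\<le>i. (dc q i l * T ^ (q ^ l)) ^ q)"
      by (rule sum.cong) (simp_all add: power_mult_distrib power_mult[symmetric] mult.commute)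
    finally show ?thesis .
  qed
  also have "\<dots> = dev q i T ^ q"
    unfolding dev_def q_def by (rule frob_sum[symmetric])
  also have "(\<Sum>l\<le>Suc i. dc q i l * T ^ (q ^ l)) = dev q i T"
    unfolding dev_def by (simp add: dc_above[OF q0])
  finally show ?thesis .
qed

lemma dev_vanish:
  fixes dummy :: "'a::{field,finite}"
  shows "j < i \<Longrightarrow> dev (card (UNIV :: 'a set)) i (Var j :: 'a mpol) = 0"
proof (induction i)
  case 0 thus ?case by simp
next
  case (Suc i)
  let ?q = "card (UNIV :: 'a set)"
  have q0: "?q > 0" by (rule card_pos_fin)
  have ds: "dev ?q (Suc i) (Var j :: 'a mpol) = dev ?q i (Var j) ^ ?q - (dev ?q i (Var i)) ^ (?q - 1) * dev ?q i (Var j)"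
    by (rule dev_Suc)
  show ?case
  proof (cases "j < i")
    case True
    hence "dev ?q i (Var j :: 'a mpol) = 0" by (rule Suc.IH)
    thus ?thesis using q0 by (simp only: ds power_0_left) simp
  next
    case False
    hence ji: "j = i" using Suc by simp
    have pw: "e ^ ?q = e ^ (?q - 1) * e" for e :: "'a mpol"
    proof -
      have "?q = Suc (?q - 1)" using q0 by simp
      hence "e ^ ?q = e ^ Suc (?q - 1)" by (rule arg_cong)
      thus ?thesis by (simp only: power_Suc2)
    qed
    have "dev ?q (Suc i) (Var j :: 'a mpol) = dev ?q i (Var i) ^ ?q - dev ?q i (Var i) ^ (?q-1) * dev ?q i (Var i)"
      using ds ji by simp
    thus ?thesis by (simp only: pw) simp
  qed
qed

lemma dc_vars: "vars_mp (dc q i k :: 'a::{comm_ring_1, zero_neq_one} mpol) \<subseteq> {..<i}"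
proof (induction i arbitrary: k)
  case 0 thus ?case by simp
next
  case (Suc i)
  have w: "vars_mp (dev q i (Var i) :: 'a mpol) \<subseteq> {..<Suc i}"
    unfolding dev_def
    apply (rule vars_sum)
    apply (rule order.trans[OF vars_mult])
    using Suc.IH vars_power[OF equalityD1[OF vars_Var[of i]]] by fastforce
  show ?case unfolding dc_Suc
    apply (rule order.trans[OF vars_minus])
    apply (rule Un_least)
    subgoal using vars_power[OF Suc.IH[of "k-1"], of q] by auto
    apply (rule order.trans[OF vars_mult])
    using Suc.IH[of k] vars_power[OF w, of "q - 1"] by auto
qed

lemma dickson_rel:
  fixes dummy :: "'a::{field,finite}"
  defines "q \<equiv> card (UNIV :: 'a set)"
  assumes "j < N"
  shows "(Var j :: 'a mpol) ^ (q ^ N) = - (\<Sum>k<N. dc q N k * Var j ^ (q ^ k))"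
proof -
  have q0: "q > 0" unfolding q_def by (rule card_pos_fin)
  have "0 = dev q N (Var j :: 'a mpol)" using dev_vanish[OF assms(2), where 'a='a] unfolding q_def by simp
  also have "\<dots> = (\<Sum>k<N. dc q N k * Var j ^ (q ^ k)) + Var j ^ (q ^ N)"
    unfolding dev_def by (simp add: lessThan_Suc_atMost[symmetric] dc_top[OF q0])
  finally show ?thesis by (simp add: eq_neg_iff_add_eq_0 add.commute)
qed

subsection \<open>Generalised Moore matrices\<close>

definition Mo :: "nat \<Rightarrow> nat \<Rightarrow> (nat \<Rightarrow> nat) \<Rightarrow> 'a::comm_ring_1 mpol mat" where
  "Mo q N e = mat N N (\<lambda>(i,j). Var j ^ (q ^ e i))"

definition Rm :: "nat \<Rightarrow> nat \<Rightarrow> (nat \<Rightarrow> nat) \<Rightarrow> 'a::comm_ring_1 mpol mat" where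
  "Rm q N e = mat N N (\<lambda>(i,k). if e i < N then (if k = e i then 1 else 0) else - dc q N k)"

lemma L_Mo: "L_mat q N = Mo q N id"
  unfolding L_mat_def Mo_def by simp

lemma Mo_factor:
  fixes dummy :: "'a::{field,finite}"
  defines "q \<equiv> card (UNIV :: 'a set)"
  assumes e: "\<And>i. i < N \<Longrightarrow> e i \<le> N"
  shows "(Mo q N e :: 'a mpol mat) = Rm q N e * L_mat q N"
proof (rule eq_matI)
  show "dim_row (Mo q N e :: 'a mpol mat) = dim_row (Rm q N e * L_mat q N)" by (simp add: Mo_def Rm_def)
  show "dim_col (Mo q N e :: 'a mpol mat) = dim_col (Rm q N e * L_mat q N)" by (simp add: Mo_def L_mat_def)
  fix i j assume ij: "i < dim_row (Rm q N e * L_mat q N :: 'a mpol mat)" "j < dim_col (Rm q N e * L_mat q N :: 'a mpol mat)"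
  hence i: "i < N" and j: "j < N" by (auto simp: Rm_def L_mat_def)
  have "(Rm q N e * L_mat q N :: 'a mpol mat) $$ (i,j) = (\<Sum>k<N. Rm q N e $$ (i,k) * (Var j ^ (q ^ k) :: 'a mpol))"
    using i j by (simp add: Rm_def L_mat_def scalar_prod_def atLeast0LessThan)
  also have "\<dots> = Var j ^ (q ^ e i)"
  proof (cases "e i < N")
    case True
    thus ?thesis using i by (simp add: Rm_def if_distrib[of "\<lambda>x. x * _"] sum.delta' cong: if_cong)
  next
    case False
    hence "e i = N" using e[OF i] by simp
    thus ?thesis using i dickson_rel[OF j, where 'a='a] unfolding q_def
      by (simp add: Rm_def sum_negf)
  qed
  finally show "(Mo q N e :: 'a mpol mat) $$ (i,j) = (Rm q N e * L_mat q N) $$ (i,j)"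
    using i j by (simp add: Mo_def)
qed

lemma det_Mo:
  fixes dummy :: "'a::{field,finite}"
  defines "q \<equiv> card (UNIV :: 'a set)"
  assumes e: "\<And>i. i < N \<Longrightarrow> e i \<le> N"
  shows "det (Mo q N e :: 'a mpol mat) = det (Rm q N e) * det (L_mat q N)"
proof -
  have "(Mo q N e :: 'a mpol mat) = Rm q N e * L_mat q N" unfolding q_def by (rule Mo_factor[OF e])
  thus ?thesis by (simp add: det_mult[of _ N] Rm_def L_mat_def)
qed

lemma vars_det_Rm: "vars_mp (det (Rm q N e :: 'a::{comm_ring_1} mpol mat)) \<subseteq> {..<N}"
  by (rule vars_det) (auto simp: Rm_def dc_vars)

subsection \<open>Laplace expansion along the last row\<close>

lemma hat_hom: "comm_ring_hom (hat_mp j :: 'a::comm_ring_1 mpol \<Rightarrow> 'a mpol)"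
  unfolding hat_mp_def[abs_def] by (rule subst_ring_hom)

lemma hat_Var: "hat_mp j (Var v) = Var (if v < j then v else Suc v)"
  unfolding hat_mp_def by simp

lemma mat_delete_last_row:
  fixes B :: "'a::comm_ring_1 mpol mat"
  assumes B: "B \<in> carrier_mat (Suc N) (Suc N)"
    and top: "\<And>i j. i < N \<Longrightarrow> j < Suc N \<Longrightarrow> B $$ (i,j) = Var j ^ (q ^ e i)"
    and jN: "j < Suc N"
  shows "mat_delete B N j = map_mat (hat_mp j) (Mo q N e)"
proof -
  interpret comm_ring_hom "hat_mp j :: 'a mpol \<Rightarrow> 'a mpol" by (rule hat_hom)
  show ?thesis
  proof (rule eq_matI)
    fix i' j' assume "i' < dim_row (map_mat (hat_mp j) (Mo q N e :: 'a mpol mat))" "j' < dim_col (map_mat (hat_mp j) (Mo q N e :: 'a mpol mat))"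
    hence i': "i' < N" and j': "j' < N" by (auto simp: Mo_def)
    have "mat_delete B N j $$ (i', j') = B $$ (i', if j' < j then j' else Suc j')"
      using B i' j' by (simp add: mat_delete_def)
    also have "\<dots> = Var (if j' < j then j' else Suc j') ^ (q ^ e i')"
      using i' j' by (intro top) auto
    also have "\<dots> = map_mat (hat_mp j) (Mo q N e) $$ (i', j')"
      using i' j' by (simp add: Mo_def hom_power hat_Var)
    finally show "mat_delete B N j $$ (i', j') = map_mat (hat_mp j) (Mo q N e) $$ (i', j')" .
  qed (use B in \<open>auto simp: Mo_def\<close>)
qed

lemma det_last_row:
  fixes B :: "'a::comm_ring_1 mpol mat"
  assumes B: "B \<in> carrier_mat (Suc N) (Suc N)"
    and top: "\<And>i j. i < N \<Longrightarrow> j < Suc N \<Longrightarrow> B $$ (i,j) = Var j ^ (q ^ e i)"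
    and bot: "\<And>j. j < Suc N \<Longrightarrow> B $$ (N,j) = Var j ^ (q ^ m) * hat_mp j h"
  shows "det B = (\<Sum>j<Suc N. Var j ^ (q ^ m) * hat_mp j h * ((-1) ^ (N + j) * hat_mp j (det (Mo q N e))))"
proof -
  have "det B = (\<Sum>j<Suc N. B $$ (N,j) * cofactor B N j)"
    by (rule laplace_expansion_row[OF B]) simp
  also have "\<dots> = (\<Sum>j<Suc N. Var j ^ (q ^ m) * hat_mp j h * ((-1) ^ (N + j) * hat_mp j (det (Mo q N e))))"
  proof (rule sum.cong[OF refl])
    fix j assume "j \<in> {..<Suc N}"
    hence j: "j < Suc N" by simp
    interpret comm_ring_hom "hat_mp j :: 'a mpol \<Rightarrow> 'a mpol" by (rule hat_hom)
    show "B $$ (N,j) * cofactor B N j = Var j ^ (q ^ m) * hat_mp j h * ((-1) ^ (N + j) * hat_mp j (det (Mo q N e)))"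
    proof -
      have md: "mat_delete B N j = map_mat (hat_mp j) (Mo q N e)"
        by (rule mat_delete_last_row[OF B top j])
      show ?thesis unfolding cofactor_def md bot[OF j] by simp
    qed
  qed
  finally show ?thesis .
qed

definition Phi :: "nat \<Rightarrow> nat \<Rightarrow> nat \<Rightarrow> 'a::comm_ring_1 mpol \<Rightarrow> 'a mpol" where
  "Phi q N m h = (\<Sum>j<Suc N. Var j ^ (q ^ m) * hat_mp j h * ((-1) ^ (N + j) * hat_mp j (det (L_mat q N))))"

lemma det_N_Phi: "det (N_mat q (Suc N) m h) = Phi q N m h"
  unfolding Phi_def L_Mo
  by (rule det_last_row[where e = id]) (auto simp: N_mat_def)

lemma det_B_Phi:
  fixes B :: "'a::{field,finite} mpol mat"
  defines "q \<equiv> card (UNIV :: 'a set)"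
  assumes B: "B \<in> carrier_mat (Suc N) (Suc N)"
    and top: "\<And>i j. i < N \<Longrightarrow> j < Suc N \<Longrightarrow> B $$ (i,j) = Var j ^ (q ^ e i)"
    and bot: "\<And>j. j < Suc N \<Longrightarrow> B $$ (N,j) = Var j ^ (q ^ m) * hat_mp j h"
    and e: "\<And>i. i < N \<Longrightarrow> e i \<le> N"
  shows "det B = Phi q N m (h * det (Rm q N e))"
proof -
  have "det B = (\<Sum>j<Suc N. Var j ^ (q ^ m) * hat_mp j h * ((-1) ^ (N + j) * hat_mp j (det (Mo q N e))))"
    by (rule det_last_row[OF B top bot])
  also have "\<dots> = Phi q N m (h * det (Rm q N e))"
    unfolding Phi_def
  proof (rule sum.cong[OF refl])
    fix j
    interpret comm_ring_hom "hat_mp j :: 'a mpol \<Rightarrow> 'a mpol" by (rule hat_hom)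
    have "det (Mo q N e :: 'a mpol mat) = det (Rm q N e) * det (L_mat q N)"
      unfolding q_def by (rule det_Mo[OF e])
    thus "Var j ^ (q ^ m) * hat_mp j h * ((-1) ^ (N + j) * hat_mp j (det (Mo q N e))) =
      Var j ^ (q ^ m) * hat_mp j (h * det (Rm q N e)) * ((-1) ^ (N + j) * hat_mp j (det (L_mat q N)))"
      by (simp add: hom_mult mult_ac)
  qed
  finally show ?thesis .
qed

lemma Phi_sum:
  assumes "\<And>t j. hat_mp j (c t) = c t"
  shows "Phi q N m (\<Sum>t\<in>A. c t * h t) = (\<Sum>t\<in>A. c t * Phi q N m (h t :: 'a::comm_ring_1 mpol))"
proof -
  have "Phi q N m (\<Sum>t\<in>A. c t * h t) = (\<Sum>j<Suc N. \<Sum>t\<in>A. c t * (Var j ^ (q ^ m) * hat_mp j (h t) * ((-1) ^ (N + j) * hat_mp j (det (L_mat q N)))))"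
    unfolding Phi_def
  proof (rule sum.cong[OF refl])
    fix j
    interpret comm_ring_hom "hat_mp j :: 'a mpol \<Rightarrow> 'a mpol" by (rule hat_hom)
    show "Var j ^ (q ^ m) * hat_mp j (\<Sum>t\<in>A. c t * h t) * ((-1) ^ (N + j) * hat_mp j (det (L_mat q N))) =
      (\<Sum>t\<in>A. c t * (Var j ^ (q ^ m) * hat_mp j (h t) * ((-1) ^ (N + j) * hat_mp j (det (L_mat q N)))))"
      by (simp add: hom_sum hom_mult assms sum_distrib_left sum_distrib_right mult_ac)
  qed
  also have "\<dots> = (\<Sum>t\<in>A. \<Sum>j<Suc N. c t * (Var j ^ (q ^ m) * hat_mp j (h t) * ((-1) ^ (N + j) * hat_mp j (det (L_mat q N)))))"
    by (rule sum.swap)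
  also have "\<dots> = (\<Sum>t\<in>A. c t * Phi q N m (h t))"
    unfolding Phi_def by (simp only: sum_distrib_left)
  finally show ?thesis .
qed

lemma main_lemma:
  fixes f :: "'a::{field,finite} mpol" and m N r :: nat
  defines "q \<equiv> card (UNIV :: 'a set)"
  assumes r: "Suc N \<le> r"
    and fv: "vars_mp f \<subseteq> {..<r}"
    and d0: "det (N_mat q (Suc (Suc N)) m f) = 0"
  shows "\<exists>g :: 'a mpol. vars_mp g \<subseteq> {..<r - 1} \<and>
           f * det (L_mat q (Suc N)) = det (N_mat q (Suc N) m g)"
proof -
  define n where "n = Suc N"
  define sg :: "nat \<Rightarrow> 'a mpol" where "sg v = (if v < n then Var v else if v = n then 1 else Var (v - 1))" for v
  define rho :: "nat \<Rightarrow> 'a mpol" where "rho v = (if v < N then Var v else if v = N then 1 else Var (v - 1))" for v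
  define g0 where "g0 = subst_mp rho f"
  interpret sig: comm_ring_hom "subst_mp sg" by (rule subst_ring_hom)
  have sig_hat: "subst_mp sg (hat_mp j f) = hat_mp j g0" if j: "j < n" for j
  proof -
    have "subst_mp sg (hat_mp j f) = subst_mp (\<lambda>v. subst_mp sg (Var (if v < j then v else Suc v))) f"
      unfolding hat_mp_def by (rule subst_subst)
    also have "\<dots> = subst_mp (\<lambda>v. hat_mp j (rho v)) f"
    proof (rule subst_cong)
      fix v
      interpret hj: comm_ring_hom "hat_mp j :: 'a mpol \<Rightarrow> 'a mpol" by (rule hat_hom)
      show "subst_mp sg (Var (if v < j then v else Suc v)) = hat_mp j (rho v)"
        using j unfolding sg_def rho_def n_def by (auto simp: hat_Var)
    qed
    also have "\<dots> = hat_mp j g0"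
      unfolding g0_def hat_mp_def by (rule subst_subst[symmetric])
    finally show ?thesis .
  qed
  have sig_hat_n: "subst_mp sg (hat_mp n f) = f"
  proof -
    have "subst_mp sg (hat_mp n f) = subst_mp (\<lambda>v. subst_mp sg (Var (if v < n then v else Suc v))) f"
      unfolding hat_mp_def by (rule subst_subst)
    also have "\<dots> = subst_mp Var f"
      by (rule subst_cong) (auto simp: sg_def)
    also have "\<dots> = f" by (rule subst_id)
    finally show ?thesis .
  qed
  define A where "A = map_mat (subst_mp sg) (N_mat q (Suc n) m f)"
  have A: "A \<in> carrier_mat (Suc n) (Suc n)" unfolding A_def N_mat_def by simp
  have detA: "det A = 0" unfolding A_def sig.hom_det using d0 unfolding n_def by simp
  have Atop: "A $$ (t, j) = (if j < n then Var j ^ (q ^ t) else 1)" if "t < n" "j < Suc n" for t j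
    using that unfolding A_def N_mat_def by (auto simp: sig.hom_power sg_def)
  have Abot: "A $$ (n, j) = (if j < n then Var j ^ (q ^ m) * hat_mp j g0 else f)" if "j < Suc n" for j
  proof (cases "j < n")
    case True thus ?thesis using that unfolding A_def N_mat_def by (auto simp: sig.hom_power sig.hom_mult sg_def sig_hat)
  next
    case False
    hence "j = n" using that by simp
    thus ?thesis unfolding A_def N_mat_def by (auto simp: sig.hom_power sig.hom_mult sg_def sig_hat_n)
  qed
  define et where "et t i = (if i < t then i else Suc i)" for t i :: nat
  define D where "D t = det (Rm q N (et t) :: 'a mpol mat)" for t
  have cof_n: "cofactor A n n = det (L_mat q n)"
  proof -
    have "mat_delete A n n = L_mat q n"
      by (rule eq_matI) (use A in \<open>auto simp: mat_delete_def L_mat_def Atop\<close>)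
    thus ?thesis unfolding cofactor_def by simp
  qed
  have cof_t: "cofactor A t n = (-1) ^ (t + n) * Phi q N m (g0 * D t)" if t: "t < n" for t
  proof -
    have "det (mat_delete A t n) = Phi q N m (g0 * D t)"
      unfolding D_def q_def
    proof (rule det_B_Phi)
      show "mat_delete A t n \<in> carrier_mat (Suc N) (Suc N)" using mat_delete_carrier[OF A, of t n] unfolding n_def by simp
      show "et t i \<le> N" if "i < N" for i using that t unfolding et_def n_def by auto
      show "mat_delete A t n $$ (i, j) = Var j ^ (card (UNIV :: 'a set) ^ et t i)" if "i < N" "j < Suc N" for i j
        using that t A unfolding et_def n_def q_def by (auto simp: mat_delete_def Atop n_def q_def)
      show "mat_delete A t n $$ (N, j) = Var j ^ (card (UNIV :: 'a set) ^ m) * hat_mp j g0" if "j < Suc N" for j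
      proof -
        have "mat_delete A t n $$ (N, j) = A $$ (n, j)"
          using that t A unfolding n_def by (auto simp: mat_delete_def)
        thus ?thesis using that Abot[of j] unfolding n_def q_def by (simp add: q_def)
      qed
    qed
    thus ?thesis unfolding cofactor_def by simp
  qed
  have "0 = det A" using detA by simp
  also have "\<dots> = (\<Sum>t<Suc n. A $$ (t, n) * cofactor A t n)"
    by (rule laplace_expansion_column[OF A]) simp
  also have "\<dots> = (\<Sum>t<n. (-1) ^ (t + n) * Phi q N m (g0 * D t)) + f * det (L_mat q n)"
    using Atop Abot cof_t cof_n by simp
  finally have eq0: "f * det (L_mat q n) = - (\<Sum>t<n. (-1) ^ (t + n) * Phi q N m (g0 * D t))"
    by (simp add: eq_neg_iff_add_eq_0 add.commute)
  define g where "g = (\<Sum>t<n. (- ((-1) ^ (t + n))) * (g0 * D t))"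
  have "Phi q N m g = (\<Sum>t<n. (- ((-1) ^ (t + n))) * Phi q N m (g0 * D t))"
    unfolding g_def
  proof (rule Phi_sum)
    fix t j
    interpret hj: comm_ring_hom "hat_mp j :: 'a mpol \<Rightarrow> 'a mpol" by (rule hat_hom)
    show "hat_mp j (- ((-1) ^ (t + n))) = (- ((-1) ^ (t + n)) :: 'a mpol)"
      by (simp add: hj.hom_uminus hj.hom_power)
  qed
  hence Pg: "Phi q N m g = - (\<Sum>t<n. (-1) ^ (t + n) * Phi q N m (g0 * D t))"
    by (simp only: sum_negf mult_minus_left)
  have "det (N_mat q n m g) = Phi q N m g" unfolding n_def by (rule det_N_Phi)
  hence "det (N_mat q n m g) = f * det (L_mat q n)" using Pg eq0 by simp
  moreover have "vars_mp g \<subseteq> {..<r - 1}"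
  proof -
    have vg0: "vars_mp g0 \<subseteq> {..<r - 1}"
    proof -
      have "vars_mp g0 \<subseteq> (\<Union>v \<in> vars_mp f. vars_mp (rho v))" unfolding g0_def by (rule vars_subst)
      also have "\<dots> \<subseteq> {..<r - 1}"
      proof (rule UN_least)
        fix v assume "v \<in> vars_mp f"
        hence "v < r" using fv by auto
        thus "vars_mp (rho v) \<subseteq> {..<r - 1}" using r unfolding rho_def by (auto simp: vars_Var)
      qed
      finally show ?thesis .
    qed
    have vD: "vars_mp (D t) \<subseteq> {..<r - 1}" for t
      using vars_det_Rm[of q N "et t", where 'a='a] r unfolding D_def by auto
    show ?thesis
      unfolding g_def
      apply (rule vars_sum)
      apply (rule order.trans[OF vars_mult])
      apply (rule Un_least)
      subgoal using vars_power[of "-1 :: 'a mpol" "{}"] by simp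
      apply (rule order.trans[OF vars_mult])
      using vg0 vD by auto
  qed
  ultimately show ?thesis unfolding n_def by auto
qed

theorem mainTheorem15:
  fixes f :: "'a::{field,finite} mpol" and m n r :: nat
  defines "q \<equiv> card (UNIV :: 'a set)"
  assumes "n \<ge> 1" and "r \<ge> n"
    and "vars_mp f \<subseteq> {..<r}"
    and "det (N_mat q (n + 1) m f) = 0"
  shows "\<exists>g :: 'a mpol. vars_mp g \<subseteq> {..<r - 1} \<and>
           f * det (L_mat q n) = det (N_mat q n m g)"
proof -
  obtain N where n: "n = Suc N" using assms(2) by (cases n) auto
  show ?thesis
    unfolding n q_def
    by (rule main_lemma) (use assms n in auto)
qed

end
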